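(* Let $A$ and $B$ be rings, $f: A\to B$ a ring homomorphism and $J$ a proper ideal of $B$ such that $f^{-1}(J)\cap \mathrm{nil}(A)=(0)$. If $f(A)+J$ is an Armendariz ring, then $A\bowtie^{f}J$ is an Armendariz ring.
   Context: All rings are associative with identity (not necessarily commutative), ring homomorphisms are unital, and ideals are two-sided. $\mathrm{nil}(R)$ denotes the set of nilpotent elements of a ring $R$. For a ring homomorphism $f:A\to B$ and an ideal $J$ of $B$, the amalgamation is the subring $A\bowtie^{f}J=\{(a,f(a)+j)\mid a\in A,\ j\in J\}$ of $A\times B$; $f(A)+J=\{f(a)+j: a\in A, j\in J\}$ is a subring of $B$. A ring $R$ is Armendariz if whenever $p(x)=\sum_{i=0}^n a_ix^i$ and $q(x)=\sum_{j=0}^m b_jx^j$ in $R[x]$ satisfy $p(x)q(x)=0$, then $a_ib_j=0$ for all $i,j$. *)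

theory Defs
  imports Main "HOL-Library.Product_Plus"
begin

definition unital_ring_hom :: "('a::ring_1 \<Rightarrow> 'b::ring_1) \<Rightarrow> bool" where
  "unital_ring_hom f \<longleftrightarrow> f 1 = 1 \<and> (\<forall>x y. f (x + y) = f x + f y) \<and> (\<forall>x y. f (x * y) = f x * f y)"

definition two_sided_ideal :: "'b::ring_1 set \<Rightarrow> bool" where
  "two_sided_ideal J \<longleftrightarrow> 0 \<in> J \<and> (\<forall>x\<in>J. \<forall>y\<in>J. x + y \<in> J) \<and> (\<forall>x\<in>J. - x \<in> J)
     \<and> (\<forall>r x. x \<in> J \<longrightarrow> r * x \<in> J \<and> x * r \<in> J)"

definition proper_ideal :: "'b::ring_1 set \<Rightarrow> bool" where
  "proper_ideal J \<longleftrightarrow> two_sided_ideal J \<and> J \<noteq> UNIV"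

definition nil_elems :: "'a::ring_1 set" where
  "nil_elems = {a. \<exists>n. a ^ n = 0}"

(* Armendariz property for a subring S (given by its carrier) w.r.t. a multiplication:
   polynomials p = sum a_i x^i (deg <= n), q = sum b_j x^j (deg <= m) with coefficients in S,
   coefficients outside the degree range are 0; pq = 0 means every coefficient of the product is 0. *)
definition armendariz_wrt :: "('r::comm_monoid_add \<Rightarrow> 'r \<Rightarrow> 'r) \<Rightarrow> 'r set \<Rightarrow> bool" where
  "armendariz_wrt mul S \<longleftrightarrow>
     (\<forall>(a::nat \<Rightarrow> 'r) (b::nat \<Rightarrow> 'r) (n::nat) (m::nat).
        (\<forall>i\<le>n. a i \<in> S) \<and> (\<forall>j\<le>m. b j \<in> S) \<and> (\<forall>i>n. a i = 0) \<and> (\<forall>j>m. b j = 0)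
        \<and> (\<forall>k. (\<Sum>i\<le>k. mul (a i) (b (k - i))) = 0)
        \<longrightarrow> (\<forall>i\<le>n. \<forall>j\<le>m. mul (a i) (b j) = 0))"

definition armendariz :: "'r::ring_1 set \<Rightarrow> bool" where
  "armendariz S \<longleftrightarrow> armendariz_wrt (*) S"

definition prod_mult :: "'a::times \<times> 'b::times \<Rightarrow> 'a \<times> 'b \<Rightarrow> 'a \<times> 'b" where
  "prod_mult x y = (fst x * fst y, snd x * snd y)"

definition image_plus_ideal :: "('a \<Rightarrow> 'b::plus) \<Rightarrow> 'b set \<Rightarrow> 'b set" where
  "image_plus_ideal f J = {f a + j | a j. j \<in> J}"

definition amalgamation :: "('a \<Rightarrow> 'b::plus) \<Rightarrow> 'b set \<Rightarrow> ('a \<times> 'b) set" where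
  "amalgamation f J = {(a, f a + j) | a j. j \<in> J}"

end

theory Submission
  imports Defs
begin

lemma core:
  fixes a b :: "nat \<Rightarrow> 'a::ring_1" and I :: "'a set"
  assumes closed: "\<And>x r s. x \<in> I \<Longrightarrow> r * x * s \<in> I"
    and red: "\<And>x. x \<in> I \<Longrightarrow> x * x * x = 0 \<Longrightarrow> x = 0"
    and inI: "\<And>i j. a i * b j \<in> I"
    and conv: "\<And>k. (\<Sum>i\<le>k. a i * b (k - i)) = 0"
  shows "a i * b j = 0"
proof -
  have key: "b j * x * a i = 0" if "a i * b j = 0" "x \<in> I" for i j x
  proof -
    let ?z = "b j * x * a i"
    have zI: "?z \<in> I" using closed that(2) by blast
    have "?z * ?z = b j * x * (a i * b j) * x * a i" by (simp add: mult.assoc)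
    hence "?z * ?z = 0" using that(1) by simp
    hence "?z * ?z * ?z = 0" by simp
    thus ?thesis using red zI by blast
  qed
  have main: "\<forall>m\<le>k. a m * b (k - m) = 0" for k
  proof (induction k rule: less_induct)
    case (less k)
    note IHk = less.IH
    show ?case
    proof (intro allI impI)
      fix m assume "m \<le> k"
      thus "a m * b (k - m) = 0"
      proof (induction m rule: less_induct)
        case (less m)
        let ?y = "a m * b (k - m)"
        have yI: "?y \<in> I" using inI by blast
        have "(\<Sum>i\<le>k. a i * b (k - i)) = ?y + (\<Sum>i\<in>{..k}-{m}. a i * b (k - i))"
          using less.prems by (subst sum.remove[of _ m]) auto
        hence yeq: "?y = - (\<Sum>i\<in>{..k}-{m}. a i * b (k - i))"
          using conv[of k] by (simp add: eq_neg_iff_add_eq_0)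
        have "?y * ?y * ?y = - (\<Sum>i\<in>{..k}-{m}. a i * b (k - i) * ?y * ?y)"
          by (subst (1) yeq) (simp add: sum_distrib_right)
        also have "(\<Sum>i\<in>{..k}-{m}. a i * b (k - i) * ?y * ?y) = 0"
        proof (rule sum.neutral, rule ballI)
          fix i assume i: "i \<in> {..k}-{m}"
          show "a i * b (k - i) * ?y * ?y = 0"
          proof (cases "i < m")
            case True
            hence "a i * b (k - i) = 0" using less.IH[of i] less.prems by simp
            thus ?thesis by simp
          next
            case False
            hence im: "m < i" using i by auto
            have "m + (k - i) < k" using im i by auto
            hence "a m * b (m + (k - i) - m) = 0"
              using IHk[of "m + (k - i)"] by (meson le_add1)
            hence "a m * b (k - i) = 0" by simp
            hence "b (k - i) * ?y * a m = 0" using key yI by blast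
            hence "a i * (b (k - i) * ?y * a m) * b (k - m) = 0" by simp
            thus ?thesis by (simp add: mult.assoc)
          qed
        qed
        finally have "?y * ?y * ?y = 0" by simp
        thus ?case using red yI by blast
      qed
    qed
  qed
  have "a i * b (i + j - i) = 0" using main[of "i + j"] le_add1 by blast
  thus ?thesis by simp
qed

theorem theorem2p2:
  fixes f :: "'a::ring_1 \<Rightarrow> 'b::ring_1" and J :: "'b set"
  assumes "unital_ring_hom f"
    and "proper_ideal J"
    and "f -` J \<inter> nil_elems = {0}"
    and "armendariz (image_plus_ideal f J)"
  shows "armendariz_wrt prod_mult (amalgamation f J)"
proof -
  have fadd: "f (x + y) = f x + f y" and fmul: "f (x * y) = f x * f y" for x y
    using assms(1) unfolding unital_ring_hom_def by auto
  have f0: "f 0 = 0" using fadd[of 0 0] by simp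
  have Jid: "two_sided_ideal J" using assms(2) unfolding proper_ideal_def by blast
  have J0: "0 \<in> J" and Jadd: "\<And>x y. x \<in> J \<Longrightarrow> y \<in> J \<Longrightarrow> x + y \<in> J"
    and Jneg: "\<And>x. x \<in> J \<Longrightarrow> - x \<in> J"
    and Jl: "\<And>x r. x \<in> J \<Longrightarrow> r * x \<in> J" and Jr: "\<And>x r. x \<in> J \<Longrightarrow> x * r \<in> J"
    using Jid unfolding two_sided_ideal_def by auto
  show ?thesis
    unfolding armendariz_wrt_def
  proof (intro allI, rule impI)
    fix P Q :: "nat \<Rightarrow> 'a \<times> 'b" and n m :: nat
    assume H: "(\<forall>i\<le>n. P i \<in> amalgamation f J) \<and> (\<forall>j\<le>m. Q j \<in> amalgamation f J) \<and>
       (\<forall>i>n. P i = 0) \<and> (\<forall>j>m. Q j = 0) \<and> (\<forall>k. (\<Sum>i\<le>k. prod_mult (P i) (Q (k - i))) = 0)"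
    define a where "a i = fst (P i)" for i
    define b where "b j = fst (Q j)" for j
    define c where "c i = snd (P i)" for i
    define d where "d j = snd (Q j)" for j
    have convA: "(\<Sum>i\<le>k. a i * b (k - i)) = 0" for k
    proof -
      have "fst (\<Sum>i\<le>k. prod_mult (P i) (Q (k - i))) = 0" using H by simp
      thus ?thesis by (simp add: fst_sum prod_mult_def a_def b_def)
    qed
    have convB: "(\<Sum>i\<le>k. c i * d (k - i)) = 0" for k
    proof -
      have "snd (\<Sum>i\<le>k. prod_mult (P i) (Q (k - i))) = 0" using H by simp
      thus ?thesis by (simp add: snd_sum prod_mult_def c_def d_def)
    qed
    have Pd: "\<exists>u\<in>J. c i = f (a i) + u" if "i \<le> n" for i
      using H that unfolding amalgamation_def a_def c_def by auto
    have Qd: "\<exists>u\<in>J. d j = f (b j) + u" if "j \<le> m" for j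
      using H that unfolding amalgamation_def b_def d_def by auto
    have cd0: "c i * d j = 0" if "i \<le> n" "j \<le> m" for i j
    proof -
      have pre: "(\<forall>i\<le>n. c i \<in> image_plus_ideal f J) \<and> (\<forall>j\<le>m. d j \<in> image_plus_ideal f J) \<and>
          (\<forall>i>n. c i = 0) \<and> (\<forall>j>m. d j = 0) \<and> (\<forall>k. (\<Sum>i\<le>k. c i * d (k - i)) = 0)"
          using Pd Qd H convB unfolding image_plus_ideal_def c_def d_def by fastforce
      have "\<forall>i\<le>n. \<forall>j\<le>m. c i * d j = 0"
        using assms(4) pre unfolding armendariz_def armendariz_wrt_def by blast
      thus ?thesis using that by blast
    qed
    have inI: "a i * b j \<in> f -` J" for i j
    proof (cases "i \<le> n \<and> j \<le> m")
      case True
      then obtain u v where u: "u \<in> J" "c i = f (a i) + u" and v: "v \<in> J" "d j = f (b j) + v"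
        using Pd Qd by blast
      have "(f (a i) + u) * (f (b j) + v) = 0" using cd0[of i j] True u v by simp
      hence "f (a i * b j) = - (f (a i) * v + u * (f (b j) + v))"
        by (simp add: fmul algebra_simps eq_neg_iff_add_eq_0)
      moreover have "- (f (a i) * v + u * (f (b j) + v)) \<in> J"
        using u v Jl Jr Jadd Jneg by blast
      ultimately show ?thesis by simp
    next
      case False
      hence "a i = 0 \<or> b j = 0" using H unfolding a_def b_def by auto
      thus ?thesis using f0 J0 by auto
    qed
    have closed: "r * x * s \<in> f -` J" if "x \<in> f -` J" for x r s
      using that Jl Jr by (simp add: fmul)
    have red: "x = 0" if "x \<in> f -` J" "x * x * x = 0" for x
    proof -
      have "x ^ 3 = 0" using that(2) by (simp add: power3_eq_cube)
      hence "x \<in> nil_elems" unfolding nil_elems_def by blast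
      thus ?thesis using that(1) assms(3) by blast
    qed
    have A0: "a i * b j = 0" for i j
      using core[of "f -` J" a b, OF closed red inI convA] by blast
    show "\<forall>i\<le>n. \<forall>j\<le>m. prod_mult (P i) (Q j) = 0"
    proof (intro allI impI)
      fix i j assume "i \<le> n" "j \<le> m"
      hence "c i * d j = 0" using cd0 by blast
      moreover have "a i * b j = 0" using A0 by blast
      ultimately show "prod_mult (P i) (Q j) = 0"
        unfolding prod_mult_def a_def b_def c_def d_def by (simp add: zero_prod_def)
    qed
  qed
qed

end
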